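(* For every integer $n\ge 3$, the corona $C_n\odot 3K_1$ admits a signed product cordial labeling.
   Context: A graph $G$ is signed product cordial if there is a vertex labeling $\alpha: V(G)\to\{1,-1\}$ such that, with the induced edge labeling $\alpha^*(uv)=\alpha(u)\alpha(v)$, we have $|v_\alpha(-1)-v_\alpha(1)|\le 1$ and $|e_{\alpha^*}(-1)-e_{\alpha^*}(1)|\le 1$. Here $v_\alpha(x)$ is the number of vertices labeled $x$ and $e_{\alpha^*}(x)$ is the number of edges labeled $x$; such an $\alpha$ is called a signed product cordial labeling. The corona $G_1\odot G_2$ of graphs $G_1$ (with $n_1$ vertices) and $G_2$ is obtained by taking one copy of $G_1$ and $n_1$ copies of $G_2$, and joining the $i$-th vertex of $G_1$ by an edge to every vertex of the $i$-th copy of $G_2$. Here $C_n$ is the cycle on $n$ vertices and $3K_1$ is the edgeless graph on $3$ vertices. So $C_n\odot 3K_1$ is the cycle $u_1\cdots u_n$ with three pendant vertices $v_x,w_x,t_x$ attached to each $u_x$. *)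

theory Defs
  imports Main
begin

text \<open>A (simple, finite) graph is a pair (V, E) of a vertex set and a set of
  edges, each edge being a 2-element subset of V.\<close>
type_synonym 'a graph = "'a set \<times> 'a set set"

definition verts :: "'a graph \<Rightarrow> 'a set" where "verts G = fst G"
definition edges :: "'a graph \<Rightarrow> 'a set set" where "edges G = snd G"

definition cycle_graph :: "nat \<Rightarrow> nat graph" where
  "cycle_graph n = ({0..<n}, {{i, (i + 1) mod n} | i. i < n})"

definition empty_graph :: "nat \<Rightarrow> nat graph" where
  "empty_graph m = ({0..<m}, {})"

text \<open>Corona G1 \<odot> G2: one copy of G1 (tagged Inl), and for each vertex v of G1
  a copy of G2 (vertices Inr (v, w)), with v joined to every vertex of its copy.\<close>
definition corona :: "'a graph \<Rightarrow> 'b graph \<Rightarrow> ('a + 'a \<times> 'b) graph" where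
  "corona G1 G2 =
     (Inl ` verts G1 \<union> {Inr (v, w) | v w. v \<in> verts G1 \<and> w \<in> verts G2},
      (\<lambda>e. Inl ` e) ` edges G1
      \<union> {(\<lambda>w. Inr (v, w)) ` e | v e. v \<in> verts G1 \<and> e \<in> edges G2}
      \<union> {{Inl v, Inr (v, w)} | v w. v \<in> verts G1 \<and> w \<in> verts G2})"

definition edge_label :: "('a \<Rightarrow> int) \<Rightarrow> 'a set \<Rightarrow> int" where
  "edge_label \<alpha> e = (\<Prod>v\<in>e. \<alpha> v)"

definition signed_product_cordial_labeling :: "'a graph \<Rightarrow> ('a \<Rightarrow> int) \<Rightarrow> bool" where
  "signed_product_cordial_labeling G \<alpha> \<longleftrightarrow>
     (\<forall>v\<in>verts G. \<alpha> v = 1 \<or> \<alpha> v = -1) \<and>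
     \<bar>int (card {v\<in>verts G. \<alpha> v = -1}) - int (card {v\<in>verts G. \<alpha> v = 1})\<bar> \<le> 1 \<and>
     \<bar>int (card {e\<in>edges G. edge_label \<alpha> e = -1}) - int (card {e\<in>edges G. edge_label \<alpha> e = 1})\<bar> \<le> 1"

definition signed_product_cordial :: "'a graph \<Rightarrow> bool" where
  "signed_product_cordial G \<longleftrightarrow> (\<exists>\<alpha>. signed_product_cordial_labeling G \<alpha>)"

end

theory Submission
  imports Defs
begin

lemma cyc_card:
  assumes "n \<ge> (3::nat)"
  shows "card {{i, (i + 1) mod n} | i. i < n} = n"
proof -
  have eq: "{{i, (i + 1) mod n} | i. i < n} = (\<lambda>i. {i, (i + 1) mod n}) ` {0..<n}" by auto
  have "inj_on (\<lambda>i. {i, (i + 1) mod n}) {0..<n}"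
  proof (rule inj_onI)
    fix i j assume i: "i \<in> {0..<n}" and j: "j \<in> {0..<n}" and e: "{i, (i + 1) mod n} = {j, (j + 1) mod n}"
    show "i = j"
    proof (rule ccontr)
      assume ne: "i \<noteq> j"
      with e have a: "i = (j + 1) mod n" and b: "j = (i + 1) mod n" by (auto simp: doubleton_eq_iff)
      have "i = (i + 2) mod n" using a b by (metis mod_add_left_eq add_Suc_right one_add_one add.assoc)
      moreover have "i + 2 < n \<or> i + 2 = n \<or> i + 2 = n + 1" using i by auto
      moreover have "(n + 1) mod n = 1" using assms by (simp add: mod_Suc)
      ultimately show False using assms i by auto
    qed
  qed
  thus ?thesis using eq by (simp add: card_image)
qed

theorem theorem2p4:
  fixes n :: nat
  assumes "n \<ge> 3"
  shows "signed_product_cordial (corona (cycle_graph n) (empty_graph 3))"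
proof -
  define \<alpha> :: "(nat + nat \<times> nat) \<Rightarrow> int" where
    "\<alpha> = (\<lambda>x. case x of Inl _ \<Rightarrow> 1 | Inr (v, w) \<Rightarrow> if w < 2 then -1 else 1)"
  define CE where "CE = {{i, (i + 1) mod n} | i. i < n}"
  let ?G = "corona (cycle_graph n) (empty_graph 3)"
  have V: "verts ?G = Inl ` {0..<n} \<union> Inr ` ({0..<n} \<times> {0..<3})"
    by (auto simp: corona_def verts_def cycle_graph_def empty_graph_def)
  have E: "edges ?G = (\<lambda>e. Inl ` e) ` CE \<union> (\<lambda>(v,w). {Inl v, Inr (v, w)}) ` ({0..<n} \<times> {0..<3})"
    by (auto simp: corona_def verts_def edges_def cycle_graph_def empty_graph_def CE_def)
  have Vm: "{v\<in>verts ?G. \<alpha> v = -1} = Inr ` ({0..<n} \<times> {0,1})"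
    unfolding V by (auto simp: \<alpha>_def image_iff less_Suc_eq split: if_splits)
  have Vp: "{v\<in>verts ?G. \<alpha> v = 1} = Inl ` {0..<n} \<union> Inr ` ({0..<n} \<times> {2})"
    unfolding V by (auto simp: \<alpha>_def image_iff less_Suc_eq split: if_splits)
  have lab_CE: "edge_label \<alpha> (Inl ` e) = 1" for e
    unfolding edge_label_def by (subst prod.reindex) (auto simp: inj_on_def \<alpha>_def)
  have lab_P: "edge_label \<alpha> {Inl v, Inr (v, w)} = (if w < 2 then -1 else 1)" for v w
    unfolding edge_label_def by (simp add: \<alpha>_def)
  have Em: "{e\<in>edges ?G. edge_label \<alpha> e = -1} = (\<lambda>(v,w). {Inl v, Inr (v, w)}) ` ({0..<n} \<times> {0,1})"
  proof
    show "{e\<in>edges ?G. edge_label \<alpha> e = -1} \<subseteq> (\<lambda>(v,w). {Inl v, Inr (v, w)}) ` ({0..<n} \<times> {0,1})"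
    proof
      fix e assume "e \<in> {e\<in>edges ?G. edge_label \<alpha> e = -1}"
      then have h: "e \<in> edges ?G" "edge_label \<alpha> e = -1" by auto
      then obtain v w where "v < n" "w < 3" "e = {Inl v, Inr (v, w)}" using lab_CE unfolding E by auto
      moreover have "w < 2" using h(2) calculation by (simp add: lab_P split: if_splits)
      ultimately show "e \<in> (\<lambda>(v,w). {Inl v, Inr (v, w)}) ` ({0..<n} \<times> {0,1})"
        by (intro rev_image_eqI[of "(v,w)"]) auto
    qed
    show "(\<lambda>(v,w). {Inl v, Inr (v, w)}) ` ({0..<n} \<times> {0,1}) \<subseteq> {e\<in>edges ?G. edge_label \<alpha> e = -1}"
      unfolding E by (auto simp: lab_P)
  qed
  have Ep: "{e\<in>edges ?G. edge_label \<alpha> e = 1} = (\<lambda>e. Inl ` e) ` CE \<union> (\<lambda>v. {Inl v, Inr (v, 2)}) ` {0..<n}"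
  proof
    show "{e\<in>edges ?G. edge_label \<alpha> e = 1} \<subseteq> (\<lambda>e. Inl ` e) ` CE \<union> (\<lambda>v. {Inl v, Inr (v, 2)}) ` {0..<n}"
    proof
      fix e assume "e \<in> {e\<in>edges ?G. edge_label \<alpha> e = 1}"
      then have h: "e \<in> edges ?G" "edge_label \<alpha> e = 1" by auto
      show "e \<in> (\<lambda>e. Inl ` e) ` CE \<union> (\<lambda>v. {Inl v, Inr (v, 2)}) ` {0..<n}"
      proof (cases "e \<in> (\<lambda>e. Inl ` e) ` CE")
        case False
        then obtain v w where "v < n" "w < 3" "e = {Inl v, Inr (v, w)}" using h(1) unfolding E by auto
        moreover have "w = 2" using h(2) calculation by (simp add: lab_P split: if_splits)
        ultimately show ?thesis by auto
      qed simp
    qed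
    show "(\<lambda>e. Inl ` e) ` CE \<union> (\<lambda>v. {Inl v, Inr (v, 2)}) ` {0..<n} \<subseteq> {e\<in>edges ?G. edge_label \<alpha> e = 1}"
      unfolding E by (auto simp: lab_P lab_CE)
  qed
  have c1: "card {v\<in>verts ?G. \<alpha> v = -1} = 2 * n"
    unfolding Vm by (subst card_image) (auto simp: card_cartesian_product)
  have c2: "card {v\<in>verts ?G. \<alpha> v = 1} = 2 * n"
    unfolding Vp by (subst card_Un_disjoint) (auto simp: card_image card_cartesian_product)
  have inj2: "inj_on (\<lambda>(v,w). {Inl v, Inr (v, w)}) ({0..<n} \<times> {0::nat,1})"
    by (auto simp: inj_on_def doubleton_eq_iff)
  have c3: "card {e\<in>edges ?G. edge_label \<alpha> e = -1} = 2 * n"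
    unfolding Em using inj2 by (simp add: card_image card_cartesian_product)
  have injI: "inj_on (\<lambda>e. Inl ` e) CE" by (meson inj_Inl inj_image_eq_iff inj_onI)
  have injP: "inj_on (\<lambda>v. {Inl v, Inr (v, 2::nat)}) {0..<n}" by (auto simp: inj_on_def doubleton_eq_iff)
  have fin: "finite CE" unfolding CE_def by simp
  have cce: "card CE = n" unfolding CE_def using cyc_card[OF assms] by simp
  have c4: "card {e\<in>edges ?G. edge_label \<alpha> e = 1} = 2 * n"
    unfolding Ep
    apply (subst card_Un_disjoint)
    using fin cce card_image[OF injI] card_image[OF injP] by auto
  have "signed_product_cordial_labeling ?G \<alpha>"
    unfolding signed_product_cordial_labeling_def
    using c1 c2 c3 c4 by (auto simp: V \<alpha>_def)
  thus ?thesis unfolding signed_product_cordial_def by blast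
qed

end
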